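(* For a translation-invariant real function $f$ defined on finite simplicial complexes with vertices in $\mathbb{R}^d\times\mathbb{A}$, the following are equivalent: (i) $f$ is weakly stabilizing; (ii) for every increasing sequence of cubes $(W_n)_{n\in\mathbb{N}}$ with $W_n\to\mathbb{R}^d$, the sequence $\Lambda_{(\mathbf{0},V,1,U)}f(\Delta_{W_n})$ converges in probability as $n\to\infty$.
   Context: Model. Fix $d\in\mathbb{N}$, a Borel space $(\mathbb{A},\mathcal{T})$ with a probability measure $\Theta$, an intensity $\gamma>0$ and $\alpha\in\mathbb{N}$. For $j\in\{1,\dots,\alpha\}$ let $\varphi_j:(\mathbb{R}^d\times\mathbb{A})^{j+1}\to[0,1]$ be measurable, symmetric and translation-invariant, i.e. $\varphi_j((x_0+t,a_0),\dots,(x_j+t,a_j))=\varphi_j((x_0,a_0),\dots,(x_j,a_j))$. Let $\mathbb{M}=\prod_{j=1}^{\alpha}[0,1]^{\mathbb{N}^{2j}}$ with the product $\sigma$-field and $\mathbb{Q}$ the product of uniform distributions on $[0,1]$ over all coordinates. Let $\Psi$ be a Poisson process on $\mathbb{R}^d\times\mathbb{A}\times[0,1]\times\mathbb{M}$ with intensity measure $\gamma\lambda_d\otimes\Theta\otimes\mathcal{U}([0,1])\otimes\mathbb{Q}$. For a locally finite counting measure $\psi$ on this space (distinct third coordinates) the complex $T(\psi)$ is built as follows. Fix an enumeration $z_0=\mathbf{0},z_1,\dots$ of $\mathbb{Z}^d$, $Q_k=[0,1)^d+z_k$. A point $(x,a,s,u)$ of $\psi$ with $x\in Q_k$ gets coordinates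 $(k,i)$ if it is the $i$-th smallest point of $\psi$ in $Q_k\times\mathbb{A}\times[0,1]\times\mathbb{M}$ in the order of third coordinates. For points $(x_0,a_0,s_0,u^{(0)}),\dots,(x_j,a_j,s_j,u^{(j)})$ with $s_0<\dots<s_j$, $1\le j\le\alpha$, and $\sigma=\{(x_0,a_0),\dots,(x_j,a_j)\}$, put $u(\sigma):=u^{(j)}_{m_0,l_0,\dots,m_{j-1},l_{j-1}}$ (coordinate in the factor $[0,1]^{\mathbb{N}^{2j}}$), $(m_k,l_k)$ the coordinates of the $k$-th point. Vertices of $T(\psi)$ are the points $(x,a)$ of $\psi$; a set $\sigma$ of $j+1$ vertices, $1\le j\le\alpha$, is a simplex iff $u(\rho)\le\varphi_{|\rho|-1}(\rho)$ for all $\rho\subseteq\sigma$ with $|\rho|\ge2$. Set $\Delta:=T(\Psi)$, $\Delta^{(x,a,t,u)}:=T(\Psi+\delta_{(x,a,t,u)})$. For a complex $K$ and $W\subseteq\mathbb{R}^d$, $K_W$ is the subcomplex of simplices all of whose vertices have first coordinate in $W$. For a real function $f$ on finite simplicial complexes, $\Lambda_{(x,a,t,u)}f(\Delta_W):=f(\Delta^{(x,a,t,u)}_W)-f(\Delta^{(x,a,t,u)}_{W\setminus\{x\}})$. Weak stabilization. Let $V\sim\Theta$ and $U\sim\mathbb{Q}$ be independent of each other and of $\Psi$. Cubes are half-open axis-parallel cubes $\prod_{i=1}^d[c_i,c_i+s)$; $W_n\to\mathbb{R}^d$ means every bounded set is contained in $W_n$ for all large $n$. $f$ is translation-invariant if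 $f(K)=f(K+t)$ for all $t\in\mathbb{R}^d$ and finite complexes $K$ ($K+t$ translates the $\mathbb{R}^d$-components of all vertices). $f$ is weakly stabilizing if it is translation-invariant and there is a real random variable $Z$ with $\Lambda_{(\mathbf{0},V,1,U)}f(\Delta_{W_n})\to Z$ in probability for every sequence of cubes $W_n\to\mathbb{R}^d$. *)

theory Defs
  imports "HOL-Probability.Probability"
begin

text \<open>Marks: the space M = prod_{j=1..alpha} [0,1]^(N^(2j)) is represented by functions
  on the countable index set mark_index alpha = {(j,l). 1 \<le> j \<le> alpha, length l = 2j}:
  the coordinate u^(j)_(m0,l0,...,m(j-1),l(j-1)) is u (j,[m0,l0,...]).\<close>

type_synonym mark = "nat \<times> nat list \<Rightarrow> real"

definition mark_index :: "nat \<Rightarrow> (nat \<times> nat list) set" where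
  "mark_index \<alpha> = {(j, l). 1 \<le> j \<and> j \<le> \<alpha> \<and> length l = 2 * j}"

definition unif01 :: "real measure" where
  "unif01 = uniform_measure lborel {0..1}"

definition markQ :: "nat \<Rightarrow> mark measure" where
  "markQ \<alpha> = PiM (mark_index \<alpha>) (\<lambda>_. unif01)"

type_synonym ('d, 'a) pt = "'d \<times> 'a \<times> real \<times> mark"

definition ploc :: "('d, 'a) pt \<Rightarrow> 'd" where "ploc p = fst p"
definition pvert :: "('d, 'a) pt \<Rightarrow> 'd \<times> 'a" where "pvert p = (fst p, fst (snd p))"
definition ptime :: "('d, 'a) pt \<Rightarrow> real" where "ptime p = fst (snd (snd p))"
definition pmark :: "('d, 'a) pt \<Rightarrow> mark" where "pmark p = snd (snd (snd p))"

definition intensity ::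
  "real \<Rightarrow> 'a measure \<Rightarrow> nat \<Rightarrow> ('d::euclidean_space, 'a) pt measure" where
  "intensity \<gamma> \<Theta> \<alpha> =
     density lborel (\<lambda>_. ennreal \<gamma>) \<Otimes>\<^sub>M \<Theta> \<Otimes>\<^sub>M unif01 \<Otimes>\<^sub>M markQ \<alpha>"

definition npts :: "'p set \<Rightarrow> 'p set \<Rightarrow> enat" where
  "npts \<psi> B = (if finite (\<psi> \<inter> B) then enat (card (\<psi> \<inter> B)) else \<infinity>)"

definition cfg_space :: "'p measure \<Rightarrow> 'p set measure" where
  "cfg_space \<mu> = sigma UNIV {{\<psi>. npts \<psi> B = k} | B k. B \<in> sets \<mu>}"

text \<open>A (simple) Poisson process with intensity measure mu, realised as a random
  set of points on the probability space P (counting measure = sum of Dirac masses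
  at the points of the set).\<close>
definition poisson_process :: "'o measure \<Rightarrow> 'p measure \<Rightarrow> ('o \<Rightarrow> 'p set) \<Rightarrow> bool" where
  "poisson_process P \<mu> \<Psi> \<longleftrightarrow>
     prob_space P \<and>
     (\<forall>B\<in>sets \<mu>. (\<lambda>\<omega>. npts (\<Psi> \<omega>) B) \<in> measurable P (count_space UNIV)) \<and>
     (\<forall>B\<in>sets \<mu>. emeasure \<mu> B < \<infinity> \<longrightarrow>
        (\<forall>k::nat. measure P {\<omega>\<in>space P. npts (\<Psi> \<omega>) B = enat k}
                   = (enn2real (emeasure \<mu> B)) ^ k / fact k * exp (- enn2real (emeasure \<mu> B)))) \<and>
     (\<forall>B\<in>sets \<mu>. emeasure \<mu> B = \<infinity> \<longrightarrow>
        (AE \<omega> in P. npts (\<Psi> \<omega>) B = \<infinity>)) \<and>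
     (\<forall>(I::nat set) B. finite I \<longrightarrow> (\<forall>i\<in>I. B i \<in> sets \<mu>) \<longrightarrow> disjoint_family_on B I \<longrightarrow>
        prob_space.indep_vars P (\<lambda>_. count_space UNIV) (\<lambda>i \<omega>. npts (\<Psi> \<omega>) (B i)) I)"

definition hcube :: "'d::euclidean_space \<Rightarrow> real \<Rightarrow> 'd set" where
  "hcube c s = {x. \<forall>i\<in>Basis. c \<bullet> i \<le> x \<bullet> i \<and> x \<bullet> i < c \<bullet> i + s}"

definition is_cube :: "'d::euclidean_space set \<Rightarrow> bool" where
  "is_cube W \<longleftrightarrow> (\<exists>c s. s > 0 \<and> W = hcube c s)"

definition lattice :: "'d::euclidean_space set" where
  "lattice = {z. \<forall>i\<in>Basis. z \<bullet> i \<in> \<int>}"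

definition lattice_enum :: "(nat \<Rightarrow> 'd::euclidean_space) \<Rightarrow> bool" where
  "lattice_enum z \<longleftrightarrow> bij_betw z UNIV lattice \<and> z 0 = 0"

definition cell :: "(nat \<Rightarrow> 'd::euclidean_space) \<Rightarrow> 'd \<Rightarrow> nat" where
  "cell z x = (THE k. x \<in> hcube (z k) 1)"

definition tends_to_space :: "(nat \<Rightarrow> 'd::euclidean_space set) \<Rightarrow> bool" where
  "tends_to_space W \<longleftrightarrow> (\<forall>B. bounded B \<longrightarrow> (\<forall>\<^sub>F n in sequentially. B \<subseteq> W n))"

text \<open>Coordinates (k,i): k the cell index, i the rank (1-based) of p among the points of
  psi in the same cell, ordered by third coordinate.\<close>
definition prank :: "(nat \<Rightarrow> 'd::euclidean_space) \<Rightarrow> ('d, 'a) pt set \<Rightarrow> ('d, 'a) pt \<Rightarrow> nat" where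
  "prank z \<psi> p = card {q\<in>\<psi>. cell z (ploc q) = cell z (ploc p) \<and> ptime q \<le> ptime p}"

text \<open>The i-th point (0-based) of a finite point set in increasing order of third coordinates.\<close>
definition ord_pt :: "('d, 'a) pt set \<Rightarrow> nat \<Rightarrow> ('d, 'a) pt" where
  "ord_pt R i = (THE p. p \<in> R \<and> card {q\<in>R. ptime q < ptime p} = i)"

text \<open>u(sigma) for a set R of j+1 points: coordinate
  u^(j)_(m0,l0,...,m(j-1),l(j-1)) of the mark of the last point.\<close>
definition uval :: "(nat \<Rightarrow> 'd::euclidean_space) \<Rightarrow> ('d, 'a) pt set \<Rightarrow> ('d, 'a) pt set \<Rightarrow> real" where
  "uval z \<psi> R =
     (let j = card R - 1 in
      pmark (ord_pt R j)
        (j, concat (map (\<lambda>k. [cell z (ploc (ord_pt R k)), prank z \<psi> (ord_pt R k)]) [0..<j])))"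

text \<open>The connection functions phi_j are given as functions of (j+1)-tuples, i.e. of maps
  on {0..j}; phi_j(rho) means phi_j applied to the vertices of rho in any order.\<close>
definition phi_val :: "(nat \<Rightarrow> (nat \<Rightarrow> 'd \<times> 'a) \<Rightarrow> real) \<Rightarrow> ('d, 'a) pt set \<Rightarrow> real" where
  "phi_val \<phi> R = \<phi> (card R - 1) (\<lambda>i. pvert (ord_pt R i))"

definition Tcomplex ::
  "(nat \<Rightarrow> 'd::euclidean_space) \<Rightarrow> nat \<Rightarrow> (nat \<Rightarrow> (nat \<Rightarrow> 'd \<times> 'a) \<Rightarrow> real)
     \<Rightarrow> ('d, 'a) pt set \<Rightarrow> ('d \<times> 'a) set set" where
  "Tcomplex z \<alpha> \<phi> \<psi> =
     {pvert ` P | P. P \<subseteq> \<psi> \<and> finite P \<and> 1 \<le> card P \<and> card P \<le> \<alpha> + 1 \<and>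
        (\<forall>R\<subseteq>P. 2 \<le> card R \<longrightarrow> uval z \<psi> R \<le> phi_val \<phi> R)}"

definition restr :: "('d \<times> 'a) set set \<Rightarrow> 'd set \<Rightarrow> ('d \<times> 'a) set set" where
  "restr K W = {\<sigma>\<in>K. \<forall>v\<in>\<sigma>. fst v \<in> W}"

definition add_one_cost ::
  "(nat \<Rightarrow> 'd::euclidean_space) \<Rightarrow> nat \<Rightarrow> (nat \<Rightarrow> (nat \<Rightarrow> 'd \<times> 'a) \<Rightarrow> real)
    \<Rightarrow> (('d \<times> 'a) set set \<Rightarrow> real) \<Rightarrow> ('d, 'a) pt \<Rightarrow> ('d, 'a) pt set \<Rightarrow> 'd set \<Rightarrow> real" where
  "add_one_cost z \<alpha> \<phi> f p \<psi> W =
     f (restr (Tcomplex z \<alpha> \<phi> (insert p \<psi>)) W)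
     - f (restr (Tcomplex z \<alpha> \<phi> (insert p \<psi>)) (W - {ploc p}))"

definition fin_complex :: "('d \<times> 'a) set set \<Rightarrow> bool" where
  "fin_complex K \<longleftrightarrow> finite K \<and> (\<forall>\<sigma>\<in>K. finite \<sigma> \<and> \<sigma> \<noteq> {} \<and>
      (\<forall>\<tau>. \<tau> \<subseteq> \<sigma> \<longrightarrow> \<tau> \<noteq> {} \<longrightarrow> \<tau> \<in> K))"

definition translate_cplx :: "('d::ab_group_add \<times> 'a) set set \<Rightarrow> 'd \<Rightarrow> ('d \<times> 'a) set set" where
  "translate_cplx K t = (\<lambda>\<sigma>. (\<lambda>(x, a). (x + t, a)) ` \<sigma>) ` K"

definition translation_invariant :: "(('d::ab_group_add \<times> 'a) set set \<Rightarrow> real) \<Rightarrow> bool" where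
  "translation_invariant f \<longleftrightarrow> (\<forall>K t. fin_complex K \<longrightarrow> f (translate_cplx K t) = f K)"

definition conv_in_prob :: "'o measure \<Rightarrow> (nat \<Rightarrow> 'o \<Rightarrow> real) \<Rightarrow> ('o \<Rightarrow> real) \<Rightarrow> bool" where
  "conv_in_prob P X Z \<longleftrightarrow>
     (\<forall>n. X n \<in> borel_measurable P) \<and> Z \<in> borel_measurable P \<and>
     (\<forall>\<epsilon>>0. (\<lambda>n. measure P {\<omega>\<in>space P. \<bar>X n \<omega> - Z \<omega>\<bar> > \<epsilon>}) \<longlonglongrightarrow> 0)"

text \<open>V ~ Theta, U ~ Q and Psi are independent: the joint law of (V,U,Psi) is the
  product of Theta, Q and the law of Psi.\<close>

definition borel_space_iso :: "'a measure \<Rightarrow> bool" where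
  "borel_space_iso A \<longleftrightarrow> (\<exists>h :: 'a \<Rightarrow> real. \<exists>S. S \<in> sets borel \<and>
     bij_betw h (space A) S \<and> h \<in> measurable A borel \<and>
     (\<forall>E\<in>sets A. h ` E \<in> sets borel))"

definition model ::
  "'o measure \<Rightarrow> 'a measure \<Rightarrow> real \<Rightarrow> nat \<Rightarrow> (nat \<Rightarrow> (nat \<Rightarrow> 'd::euclidean_space \<times> 'a) \<Rightarrow> real)
    \<Rightarrow> (nat \<Rightarrow> 'd) \<Rightarrow> ('o \<Rightarrow> ('d, 'a) pt set) \<Rightarrow> ('o \<Rightarrow> 'a) \<Rightarrow> ('o \<Rightarrow> mark) \<Rightarrow> bool" where
  "model P \<Theta> \<gamma> \<alpha> \<phi> z \<Psi> V U \<longleftrightarrow>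
     prob_space P \<and> prob_space \<Theta> \<and> borel_space_iso \<Theta> \<and> \<gamma> > 0 \<and> 1 \<le> \<alpha> \<and>
     (\<forall>j\<in>{1..\<alpha>}.
        \<phi> j \<in> borel_measurable (PiM {..j} (\<lambda>_. (lborel :: 'd measure) \<Otimes>\<^sub>M \<Theta>)) \<and>
        (\<forall>v. 0 \<le> \<phi> j v \<and> \<phi> j v \<le> 1) \<and>
        (\<forall>v \<pi>. \<pi> permutes {..j} \<longrightarrow> \<phi> j (v \<circ> \<pi>) = \<phi> j v) \<and>
        (\<forall>v t. \<phi> j (\<lambda>i. (fst (v i) + t, snd (v i))) = \<phi> j v)) \<and>
     lattice_enum z \<and>
     poisson_process P (intensity \<gamma> \<Theta> \<alpha>) \<Psi> \<and>
     V \<in> measurable P \<Theta> \<and> U \<in> measurable P (markQ \<alpha>) \<and>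
     \<Psi> \<in> measurable P (cfg_space (intensity \<gamma> \<Theta> \<alpha>)) \<and>
     distr P (\<Theta> \<Otimes>\<^sub>M markQ \<alpha> \<Otimes>\<^sub>M cfg_space (intensity \<gamma> \<Theta> \<alpha>))
        (\<lambda>\<omega>. (V \<omega>, U \<omega>, \<Psi> \<omega>))
       = \<Theta> \<Otimes>\<^sub>M markQ \<alpha> \<Otimes>\<^sub>M distr P (cfg_space (intensity \<gamma> \<Theta> \<alpha>)) \<Psi>"

definition Lam0 ::
  "(nat \<Rightarrow> 'd::euclidean_space) \<Rightarrow> nat \<Rightarrow> (nat \<Rightarrow> (nat \<Rightarrow> 'd \<times> 'a) \<Rightarrow> real)
    \<Rightarrow> (('d \<times> 'a) set set \<Rightarrow> real) \<Rightarrow> ('o \<Rightarrow> ('d, 'a) pt set) \<Rightarrow> ('o \<Rightarrow> 'a) \<Rightarrow> ('o \<Rightarrow> mark)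
    \<Rightarrow> 'd set \<Rightarrow> 'o \<Rightarrow> real" where
  "Lam0 z \<alpha> \<phi> f \<Psi> V U W \<omega> = add_one_cost z \<alpha> \<phi> f (0, V \<omega>, 1, U \<omega>) (\<Psi> \<omega>) W"

definition weakly_stabilizing ::
  "'o measure \<Rightarrow> (nat \<Rightarrow> 'd::euclidean_space) \<Rightarrow> nat \<Rightarrow> (nat \<Rightarrow> (nat \<Rightarrow> 'd \<times> 'a) \<Rightarrow> real)
    \<Rightarrow> (('d \<times> 'a) set set \<Rightarrow> real) \<Rightarrow> ('o \<Rightarrow> ('d, 'a) pt set) \<Rightarrow> ('o \<Rightarrow> 'a) \<Rightarrow> ('o \<Rightarrow> mark) \<Rightarrow> bool" where
  "weakly_stabilizing P z \<alpha> \<phi> f \<Psi> V U \<longleftrightarrow>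
     translation_invariant f \<and>
     (\<exists>Z. \<forall>W. (\<forall>n. is_cube (W n)) \<longrightarrow> tends_to_space W \<longrightarrow>
        conv_in_prob P (\<lambda>n. Lam0 z \<alpha> \<phi> f \<Psi> V U (W n)) Z)"

end

theory Submission
  imports Defs
begin

lemma subsub_tendsto:
  fixes f :: "nat \<Rightarrow> real"
  assumes H: "\<And>r::nat\<Rightarrow>nat. strict_mono r \<Longrightarrow> \<exists>s. strict_mono s \<and> (\<lambda>n. f (r (s n))) \<longlonglongrightarrow> l"
  shows "f \<longlonglongrightarrow> l"
proof (rule ccontr)
  assume "\<not> f \<longlonglongrightarrow> l"
  then obtain e where e: "e > 0" and fr: "\<forall>N. \<exists>n\<ge>N. \<not> dist (f n) l < e"
    unfolding lim_sequentially by (metis not_le)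
  define S where "S = {n. \<not> dist (f n) l < e}"
  have inf: "infinite S" unfolding S_def infinite_nat_iff_unbounded_le using fr by blast
  define r where "r = enumerate S"
  have sm: "strict_mono r" unfolding r_def using strict_mono_enumerate[OF inf] .
  have inS: "\<And>n. r n \<in> S" unfolding r_def using enumerate_in_set[OF inf] by blast
  obtain s where "strict_mono s" and lim: "(\<lambda>n. f (r (s n))) \<longlonglongrightarrow> l" using H[OF sm] by blast
  then obtain N where "\<forall>n\<ge>N. dist (f (r (s n))) l < e" using e unfolding lim_sequentially by blast
  then show False using inS[of "s N"] unfolding S_def by auto
qed

lemma conv_sub:
  assumes "conv_in_prob P X Z" "strict_mono r"
  shows "conv_in_prob P (\<lambda>n. X (r n)) Z"
proof -
  have "\<And>\<epsilon>. \<epsilon> > 0 \<Longrightarrow> (\<lambda>n. measure P {\<omega>\<in>space P. \<bar>X (r n) \<omega> - Z \<omega>\<bar> > \<epsilon>}) \<longlonglongrightarrow> 0"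
  proof -
    fix \<epsilon> :: real assume "\<epsilon> > 0"
    then have "(\<lambda>n. measure P {\<omega>\<in>space P. \<bar>X n \<omega> - Z \<omega>\<bar> > \<epsilon>}) \<longlonglongrightarrow> 0"
      using assms(1) unfolding conv_in_prob_def by blast
    from LIMSEQ_subseq_LIMSEQ[OF this assms(2)]
    show "(\<lambda>n. measure P {\<omega>\<in>space P. \<bar>X (r n) \<omega> - Z \<omega>\<bar> > \<epsilon>}) \<longlonglongrightarrow> 0" by (simp add: o_def)
  qed
  then show ?thesis using assms(1) unfolding conv_in_prob_def by blast
qed

lemma conv_uniq:
  assumes P: "prob_space P" and XZ: "conv_in_prob P X Z" and XZ': "conv_in_prob P X Z'"
    and YZ: "conv_in_prob P Y Z"
  shows "conv_in_prob P Y Z'"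
proof -
  interpret prob_space P by (rule P)
  have mX: "\<And>n. X n \<in> borel_measurable P" and mZ: "Z \<in> borel_measurable P"
    and mZ': "Z' \<in> borel_measurable P" and mY: "\<And>n. Y n \<in> borel_measurable P"
    using XZ XZ' YZ unfolding conv_in_prob_def by auto
  have zero: "measure P {\<omega>\<in>space P. \<bar>Z \<omega> - Z' \<omega>\<bar> > d} = 0" if d: "d > 0" for d
  proof -
    let ?A = "\<lambda>n. measure P {\<omega>\<in>space P. \<bar>X n \<omega> - Z \<omega>\<bar> > d/2}"
    let ?B = "\<lambda>n. measure P {\<omega>\<in>space P. \<bar>X n \<omega> - Z' \<omega>\<bar> > d/2}"
    have a: "?A \<longlonglongrightarrow> 0" using XZ half_gt_zero[OF d] unfolding conv_in_prob_def by blast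
    have b: "?B \<longlonglongrightarrow> 0" using XZ' half_gt_zero[OF d] unfolding conv_in_prob_def by blast
    have le: "measure P {\<omega>\<in>space P. \<bar>Z \<omega> - Z' \<omega>\<bar> > d} \<le> ?A n + ?B n" for n
    proof -
      have "{\<omega>\<in>space P. \<bar>Z \<omega> - Z' \<omega>\<bar> > d} \<subseteq>
            {\<omega>\<in>space P. \<bar>X n \<omega> - Z \<omega>\<bar> > d/2} \<union> {\<omega>\<in>space P. \<bar>X n \<omega> - Z' \<omega>\<bar> > d/2}"
        by (auto simp: abs_diff_le_iff) (smt (verit, best))
      moreover have "{\<omega>\<in>space P. \<bar>X n \<omega> - Z \<omega>\<bar> > d/2} \<in> sets P"
        using mX mZ by measurable
      moreover have "{\<omega>\<in>space P. \<bar>X n \<omega> - Z' \<omega>\<bar> > d/2} \<in> sets P"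
        using mX mZ' by measurable
      ultimately show ?thesis
        by (meson finite_measure_mono measure_Un_le sets.Un order_trans)
    qed
    have "(\<lambda>n. ?A n + ?B n) \<longlonglongrightarrow> 0 + 0" using a b by (rule tendsto_add)
    then have "measure P {\<omega>\<in>space P. \<bar>Z \<omega> - Z' \<omega>\<bar> > d} \<le> 0"
      using le by (intro LIMSEQ_le_const) auto
    then show ?thesis by (simp add: measure_nonneg order_antisym)
  qed
  have "(\<lambda>n. measure P {\<omega>\<in>space P. \<bar>Y n \<omega> - Z' \<omega>\<bar> > \<epsilon>}) \<longlonglongrightarrow> 0" if e: "\<epsilon> > 0" for \<epsilon>
  proof -
    let ?C = "\<lambda>n. measure P {\<omega>\<in>space P. \<bar>Y n \<omega> - Z \<omega>\<bar> > \<epsilon>/2}"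
    have c: "?C \<longlonglongrightarrow> 0" using YZ half_gt_zero[OF e] unfolding conv_in_prob_def by blast
    have le: "measure P {\<omega>\<in>space P. \<bar>Y n \<omega> - Z' \<omega>\<bar> > \<epsilon>} \<le> ?C n + 0" for n
    proof -
      have "{\<omega>\<in>space P. \<bar>Y n \<omega> - Z' \<omega>\<bar> > \<epsilon>} \<subseteq>
            {\<omega>\<in>space P. \<bar>Y n \<omega> - Z \<omega>\<bar> > \<epsilon>/2} \<union> {\<omega>\<in>space P. \<bar>Z \<omega> - Z' \<omega>\<bar> > \<epsilon>/2}"
        by (auto simp: abs_diff_le_iff) (smt (verit, best))
      moreover have "{\<omega>\<in>space P. \<bar>Y n \<omega> - Z \<omega>\<bar> > \<epsilon>/2} \<in> sets P"
        using mY mZ by measurable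
      moreover have "{\<omega>\<in>space P. \<bar>Z \<omega> - Z' \<omega>\<bar> > \<epsilon>/2} \<in> sets P"
        using mZ mZ' by measurable
      ultimately have "measure P {\<omega>\<in>space P. \<bar>Y n \<omega> - Z' \<omega>\<bar> > \<epsilon>} \<le> ?C n +
          measure P {\<omega>\<in>space P. \<bar>Z \<omega> - Z' \<omega>\<bar> > \<epsilon>/2}"
        by (meson finite_measure_mono measure_Un_le sets.Un order_trans)
      then show ?thesis using zero[of "\<epsilon>/2"] e by simp
    qed
    show ?thesis
      by (rule tendsto_sandwich[of "\<lambda>_. 0" _ _ "\<lambda>n. ?C n + 0"]) (use le c in auto)
  qed
  then show ?thesis using mY mZ' unfolding conv_in_prob_def by blast
qed

lemma hcube_bounded: "bounded (hcube (c::'d::euclidean_space) s)"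
proof -
  have "hcube c s \<subseteq> cbox c (c + s *\<^sub>R One)"
    by (auto simp: hcube_def mem_box inner_simps less_imp_le)
  then show ?thesis using bounded_cbox bounded_subset by blast
qed

lemma is_cube_bounded: "is_cube W \<Longrightarrow> bounded W"
  using hcube_bounded unfolding is_cube_def by blast

definition sel :: "(nat \<Rightarrow> 'd set) \<Rightarrow> (nat \<Rightarrow> 'd set) \<Rightarrow> nat \<Rightarrow> nat \<Rightarrow> 'd set" where
  "sel A B n m = (if even n then A m else B m)"

primrec idx :: "(nat \<Rightarrow> 'd set) \<Rightarrow> (nat \<Rightarrow> 'd set) \<Rightarrow> nat \<Rightarrow> nat" where
  "idx A B 0 = 0"
| "idx A B (Suc n) = (LEAST m. idx A B n < m \<and> sel A B n (idx A B n) \<subseteq> sel A B (Suc n) m)"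

lemma tends_exists:
  assumes "tends_to_space W" "bounded X"
  shows "\<exists>m>k. X \<subseteq> W m"
proof -
  from assms obtain N where "\<forall>n\<ge>N. X \<subseteq> W n"
    unfolding tends_to_space_def eventually_sequentially by blast
  then show ?thesis by (intro exI[of _ "max N (Suc k)"]) auto
qed

lemma interleave:
  fixes A B :: "nat \<Rightarrow> 'd::euclidean_space set"
  assumes cA: "\<forall>n. is_cube (A n)" and cB: "\<forall>n. is_cube (B n)"
    and tA: "tends_to_space A" and tB: "tends_to_space B"
  obtains S r s where "\<forall>n. is_cube (S n)" "\<forall>n. S n \<subseteq> S (Suc n)" "tends_to_space S"
    "strict_mono r" "strict_mono s" "r 0 = 0"
    "\<And>k. S (2*k) = A (r k)" "\<And>k. S (2*k+1) = B (s k)"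
proof -
  define S where "S n = sel A B n (idx A B n)" for n
  have cS: "is_cube (sel A B n m)" for n m using cA cB by (simp add: sel_def)
  have tS: "tends_to_space (sel A B n)" for n
    proof (cases "even n")
      case True
      then have "sel A B n = A" by (simp add: sel_def fun_eq_iff)
      then show ?thesis using tA by simp
    next
      case False
      then have "sel A B n = B" by (simp add: sel_def fun_eq_iff)
      then show ?thesis using tB by simp
    qed
  have step: "idx A B n < idx A B (Suc n) \<and> S n \<subseteq> sel A B (Suc n) (idx A B (Suc n))" for n
  proof -
    have "\<exists>m. idx A B n < m \<and> sel A B n (idx A B n) \<subseteq> sel A B (Suc n) m"
      using tends_exists[OF tS is_cube_bounded[OF cS]] by blast
    from LeastI_ex[OF this] show ?thesis by (simp add: S_def)
  qed
  have smi: "strict_mono (idx A B)" using step by (simp add: strict_mono_Suc_iff)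
  have incr: "\<forall>n. S n \<subseteq> S (Suc n)" using step by (simp add: S_def)
  have ge: "n \<le> idx A B n" for n using seq_suble[OF smi] .
  have tends: "tends_to_space S" unfolding tends_to_space_def
  proof (intro allI impI)
    fix X :: "'d set" assume X: "bounded X"
    from tA X obtain N1 where N1: "\<forall>n\<ge>N1. X \<subseteq> A n"
      unfolding tends_to_space_def eventually_sequentially by blast
    from tB X obtain N2 where N2: "\<forall>n\<ge>N2. X \<subseteq> B n"
      unfolding tends_to_space_def eventually_sequentially by blast
    show "\<forall>\<^sub>F n in sequentially. X \<subseteq> S n" unfolding eventually_sequentially
    proof (intro exI[of _ "max N1 N2"] allI impI)
      fix n assume "max N1 N2 \<le> n"
      then have "N1 \<le> idx A B n" "N2 \<le> idx A B n" using ge[of n] by auto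
      then show "X \<subseteq> S n" using N1 N2 by (simp add: S_def sel_def)
    qed
  qed
  define r where "r k = idx A B (2*k)" for k
  define s where "s k = idx A B (2*k+1)" for k
  have "strict_mono r" unfolding r_def strict_mono_def
    using strict_monoD[OF smi] by simp
  moreover have "strict_mono s" unfolding s_def strict_mono_def
    using strict_monoD[OF smi] by (simp del: idx.simps)
  moreover have "\<forall>n. is_cube (S n)" using cS by (simp add: S_def)
  moreover have "r 0 = 0" by (simp add: r_def)
  moreover have "\<And>k. S (2*k) = A (r k)" by (simp add: S_def r_def sel_def)
  moreover have "\<And>k. S (2*k+1) = B (s k)" by (simp add: S_def s_def sel_def)
  ultimately show ?thesis using that incr tends by blast
qed

definition W0 :: "nat \<Rightarrow> 'd::euclidean_space set" where
  "W0 n = hcube (- (real n + 1) *\<^sub>R One) (2 * (real n + 1))"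

lemma W0_props:
  shows "\<forall>n. is_cube (W0 n :: 'd::euclidean_space set)" "\<forall>n. (W0 n :: 'd set) \<subseteq> W0 (Suc n)"
    "tends_to_space (W0 :: nat \<Rightarrow> 'd set)"
proof -
  show "\<forall>n. is_cube (W0 n :: 'd::euclidean_space set)"
    unfolding is_cube_def W0_def by (auto intro!: exI)
  show "\<forall>n. (W0 n :: 'd set) \<subseteq> W0 (Suc n)"
    by (auto simp: W0_def hcube_def inner_simps)
  show "tends_to_space (W0 :: nat \<Rightarrow> 'd set)" unfolding tends_to_space_def
  proof (intro allI impI)
    fix X :: "'d set" assume "bounded X"
    then obtain R where R: "\<forall>x\<in>X. norm x \<le> R" unfolding bounded_iff by blast
    obtain N :: nat where N: "R < real N" using reals_Archimedean2 by blast
    show "\<forall>\<^sub>F n in sequentially. X \<subseteq> W0 n" unfolding eventually_sequentially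
    proof (intro exI[of _ N] allI impI subsetI)
      fix n x assume n: "N \<le> n" and x: "x \<in> X"
      have "\<bar>x \<bullet> i\<bar> < real n + 1" if "i \<in> Basis" for i
      proof -
        have "\<bar>x \<bullet> i\<bar> \<le> norm x" using Basis_le_norm[OF that] .
        also have "\<dots> \<le> R" using R x by blast
        finally show ?thesis using N n by linarith
      qed
      then show "x \<in> W0 n" by (force simp: W0_def hcube_def inner_simps abs_less_iff)
    qed
  qed
qed

theorem proposition5p1:
  fixes P :: "'o measure" and \<Theta> :: "'a measure" and \<gamma> :: real and \<alpha> :: nat
    and \<phi> :: "nat \<Rightarrow> (nat \<Rightarrow> 'd::euclidean_space \<times> 'a) \<Rightarrow> real"
    and z :: "nat \<Rightarrow> 'd" and \<Psi> :: "'o \<Rightarrow> ('d, 'a) pt set"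
    and V :: "'o \<Rightarrow> 'a" and U :: "'o \<Rightarrow> mark"
    and f :: "('d \<times> 'a) set set \<Rightarrow> real"
  assumes "model P \<Theta> \<gamma> \<alpha> \<phi> z \<Psi> V U"
    and "translation_invariant f"
  shows "weakly_stabilizing P z \<alpha> \<phi> f \<Psi> V U \<longleftrightarrow>
         (\<forall>W. (\<forall>n. is_cube (W n)) \<longrightarrow> (\<forall>n. W n \<subseteq> W (Suc n)) \<longrightarrow> tends_to_space W \<longrightarrow>
            (\<exists>Z. conv_in_prob P (\<lambda>n. Lam0 z \<alpha> \<phi> f \<Psi> V U (W n)) Z))"
proof
  assume "weakly_stabilizing P z \<alpha> \<phi> f \<Psi> V U"
  then obtain Z where "\<forall>W. (\<forall>n. is_cube (W n)) \<longrightarrow> tends_to_space W \<longrightarrow>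
        conv_in_prob P (\<lambda>n. Lam0 z \<alpha> \<phi> f \<Psi> V U (W n)) Z"
    unfolding weakly_stabilizing_def by blast
  then show "\<forall>W. (\<forall>n. is_cube (W n)) \<longrightarrow> (\<forall>n. W n \<subseteq> W (Suc n)) \<longrightarrow> tends_to_space W \<longrightarrow>
            (\<exists>Z. conv_in_prob P (\<lambda>n. Lam0 z \<alpha> \<phi> f \<Psi> V U (W n)) Z)" by blast
next
  assume H: "\<forall>W. (\<forall>n. is_cube (W n)) \<longrightarrow> (\<forall>n. W n \<subseteq> W (Suc n)) \<longrightarrow> tends_to_space W \<longrightarrow>
            (\<exists>Z. conv_in_prob P (\<lambda>n. Lam0 z \<alpha> \<phi> f \<Psi> V U (W n)) Z)"
  have P: "prob_space P" using assms(1) unfolding model_def by blast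
  let ?L = "Lam0 z \<alpha> \<phi> f \<Psi> V U"
  obtain Z0 where Z0: "conv_in_prob P (\<lambda>n. ?L (W0 n)) Z0" using H W0_props by blast
  have G: "\<exists>s. strict_mono s \<and> conv_in_prob P (\<lambda>n. ?L (W' (s n))) Z0"
    if cW': "\<forall>n. is_cube (W' n)" and tW': "tends_to_space W'" for W'
  proof -
    obtain S r s where S: "\<forall>n. is_cube (S n)" "\<forall>n. S n \<subseteq> S (Suc n)" "tends_to_space S"
      "strict_mono r" "strict_mono s" "r 0 = 0"
      "\<And>k. S (2*k) = W0 (r k)" "\<And>k. S (2*k+1) = W' (s k)"
      using interleave[OF W0_props(1) cW' W0_props(3) tW'] by blast
    obtain ZS where ZS: "conv_in_prob P (\<lambda>n. ?L (S n)) ZS" using H S by blast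
    have sm2: "strict_mono (\<lambda>k::nat. 2*k)" by (simp add: strict_mono_def)
    have sm21: "strict_mono (\<lambda>k::nat. 2*k+1)" by (simp add: strict_mono_def)
    have e1: "conv_in_prob P (\<lambda>k. ?L (W0 (r k))) ZS"
      using conv_sub[OF ZS sm2] S(7) by simp
    have e2: "conv_in_prob P (\<lambda>k. ?L (W0 (r k))) Z0"
      using conv_sub[OF Z0 S(4)] .
    have o: "conv_in_prob P (\<lambda>k. ?L (W' (s k))) ZS"
      using conv_sub[OF ZS sm21] S(8) by simp
    show ?thesis using conv_uniq[OF P e1 e2 o] S(5) by blast
  qed
  have meas: "?L C \<in> borel_measurable P" if C: "is_cube C" for C
  proof -
    define A where "A = (W0 :: nat \<Rightarrow> 'd set)(0 := C)"
    have cA: "\<forall>n. is_cube (A n)" using C W0_props(1)[where ?'d='d] by (simp add: A_def)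
    have tA: "tends_to_space A" unfolding tends_to_space_def
    proof (intro allI impI)
      fix X :: "'d set" assume "bounded X"
      then obtain N where N: "\<forall>n\<ge>N. X \<subseteq> W0 n"
        using W0_props(3) unfolding tends_to_space_def eventually_sequentially by blast
      show "\<forall>\<^sub>F n in sequentially. X \<subseteq> A n" unfolding eventually_sequentially
        by (rule exI[of _ "max N 1"]) (use N in \<open>auto simp: A_def\<close>)
    qed
    obtain S r s where S: "\<forall>n. is_cube (S n)" "\<forall>n. S n \<subseteq> S (Suc n)" "tends_to_space S"
      "strict_mono r" "strict_mono s" "r 0 = 0"
      "\<And>k. S (2*k) = A (r k)" "\<And>k. S (2*k+1) = A (s k)"
      using interleave[OF cA cA tA tA] by blast
    obtain ZS where ZS: "conv_in_prob P (\<lambda>n. ?L (S n)) ZS" using H S by blast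
    have "S 0 = C" using S(7)[of 0] S(6) by (simp add: A_def)
    then show ?thesis using ZS unfolding conv_in_prob_def by metis
  qed
  show "weakly_stabilizing P z \<alpha> \<phi> f \<Psi> V U"
    unfolding weakly_stabilizing_def
  proof (intro conjI exI[of _ Z0] allI impI)
    show "translation_invariant f" by (rule assms(2))
    fix W :: "nat \<Rightarrow> 'd set" assume cW: "\<forall>n. is_cube (W n)" and tW: "tends_to_space W"
    have mZ0: "Z0 \<in> borel_measurable P" using Z0 unfolding conv_in_prob_def by blast
    have "(\<lambda>n. measure P {\<omega>\<in>space P. \<bar>?L (W n) \<omega> - Z0 \<omega>\<bar> > \<epsilon>}) \<longlonglongrightarrow> 0"
      if e: "\<epsilon> > 0" for \<epsilon>
    proof (rule subsub_tendsto)
      fix r :: "nat \<Rightarrow> nat" assume r: "strict_mono r"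
      have c: "\<forall>n. is_cube (W (r n))" using cW by simp
      have t: "tends_to_space (\<lambda>n. W (r n))" using tW eventually_subseq[OF r]
        unfolding tends_to_space_def by blast
      obtain s where "strict_mono s" and cs: "conv_in_prob P (\<lambda>n. ?L (W (r (s n)))) Z0"
        using G[OF c t] by blast
      then show "\<exists>s. strict_mono s \<and>
          (\<lambda>n. measure P {\<omega>\<in>space P. \<bar>?L (W (r (s n))) \<omega> - Z0 \<omega>\<bar> > \<epsilon>}) \<longlonglongrightarrow> 0"
        using e unfolding conv_in_prob_def by blast
    qed
    then show "conv_in_prob P (\<lambda>n. ?L (W n)) Z0"
      unfolding conv_in_prob_def using meas cW mZ0 by blast
  qed
qed

end
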